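(* Let $\varphi$ be a quantifier-free formula in the SMT theory of bit-vectors and let $\mathit{cost}$ be a bit-vector variable of width $n$ occurring in $\varphi$, interpreted either as unsigned or as signed (two's complement). Consider the problem of minimizing (resp. maximizing) $\mathit{cost}$ subject to $\varphi$, i.e. finding a model $\mathcal{M}$ of $\varphi$ whose value $\mathcal{M}(\mathit{cost})$ is minimum (resp. maximum) among all models of $\varphi$ with respect to the unsigned order if $\mathit{cost}$ is unsigned and the signed (two's complement) order if $\mathit{cost}$ is signed. Let $\mathit{attr}$ be the attractor of $\mathit{cost}$ and $A=[A[0],\dots,A[n-1]]$ the vector of attractor equalities. Then any model $\mathcal{M}$ of $\varphi$ which lexicographically maximizes $A$ with respect to $\varphi$ is an optimal solution of this problem, i.e. $\mathcal{M}(\mathit{cost})$ is minimum (resp. maximum) among the values of $\mathit{cost}$ in models of $\varphi$.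
   Context: Bits of $\mathit{cost}$ are indexed from the most significant bit $\mathit{cost}[0]$ to the least significant bit $\mathit{cost}[n-1]$. An unsigned $n$-bit vector has value $\sum_{k=0}^{n-1}2^{n-1-k}\,\mathit{cost}[k]\in[0,2^n-1]$; a signed one has value $-2^{n-1}\mathit{cost}[0]+\sum_{k=1}^{n-1}2^{n-1-k}\mathit{cost}[k]\in[-2^{n-1},2^{n-1}-1]$. When minimizing (resp. maximizing), the attractor $\mathit{attr}$ is the smallest (resp. greatest) bit-vector value of the sort of $\mathit{cost}$ (e.g. $[0\dots0]$ for unsigned minimization, $[10\dots0]$ for signed minimization, $[1\dots1]$ for unsigned maximization, $[01\dots1]$ for signed maximization). The vector of attractor equalities is $A$ with $A[k]:=(\mathit{cost}[k]=\mathit{attr}[k])$ for $k\in[0..n-1]$. For an assignment $\tau_n$ to all bits of $\mathit{cost}$ and $i\le n$, $\tau_n|_i$ denotes its restriction to the bits $\mathit{cost}[0],\dots,\mathit{cost}[i-1]$ (viewed as a conjunction of bit literals). An assignment $\tau_n$ to $\mathit{cost}$ lexicographically maximizes $A$ with respect to $\varphi$ iff for every $k\in[0..n-1]$: $\tau_n[k]=\overline{\mathit{attr}[k]}$ (the complement bit) if $\varphi\wedge\tau_n|_k\wedge A[k]$ is unsatisfiable, and $\tau_n[k]=\mathit{attr}[k]$ otherwise. A model $\mathcal{M}$ of $\varphi$ lexicographically maximizes $A$ with respect to $\varphi$ iff its restriction to the bits of $\mathit{cost}$ does. *)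

theory Defs
  imports Main
begin

text \<open>Bit-vectors of width n are lists of booleans of length n; bit 0 (head) is the
most significant bit.\<close>

datatype signedness = Unsigned | Signed
datatype direction = Minimize | Maximize

definition bit_val :: "bool \<Rightarrow> int" where
  "bit_val b = (if b then 1 else 0)"

definition bv_val :: "signedness \<Rightarrow> bool list \<Rightarrow> int" where
  "bv_val s bs = (let n = length bs in
     (case s of
        Unsigned \<Rightarrow> (\<Sum>k<n. 2 ^ (n - 1 - k) * bit_val (bs ! k))
      | Signed \<Rightarrow> - (2 ^ (n - 1)) * bit_val (bs ! 0)
                  + (\<Sum>k\<in>{1..<n}. 2 ^ (n - 1 - k) * bit_val (bs ! k))))"

definition better_eq :: "signedness \<Rightarrow> direction \<Rightarrow> bool list \<Rightarrow> bool list \<Rightarrow> bool" where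
  "better_eq s d v w = (case d of
      Minimize \<Rightarrow> bv_val s v \<le> bv_val s w
    | Maximize \<Rightarrow> bv_val s v \<ge> bv_val s w)"

definition attractor :: "signedness \<Rightarrow> direction \<Rightarrow> nat \<Rightarrow> bool list" where
  "attractor s d n = (SOME a. length a = n \<and>
       (\<forall>w. length w = n \<longrightarrow> better_eq s d a w))"

text \<open>Abstract view of a formula: phi is the set of its models (of type 'm), and
cost M is the bit-vector value of the variable cost in model M.
Satisfiability of phi /\ tau|_k /\ A[k].\<close>
definition sat_prefix_attr ::
  "signedness \<Rightarrow> direction \<Rightarrow> nat \<Rightarrow> ('m \<Rightarrow> bool) \<Rightarrow> ('m \<Rightarrow> bool list) \<Rightarrow> bool list \<Rightarrow> nat \<Rightarrow> bool" where
  "sat_prefix_attr s d n phi cost tau k =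
     (\<exists>M'. phi M' \<and> take k (cost M') = take k tau \<and> cost M' ! k = attractor s d n ! k)"

definition lex_max_assignment ::
  "signedness \<Rightarrow> direction \<Rightarrow> nat \<Rightarrow> ('m \<Rightarrow> bool) \<Rightarrow> ('m \<Rightarrow> bool list) \<Rightarrow> bool list \<Rightarrow> bool" where
  "lex_max_assignment s d n phi cost tau =
     (length tau = n \<and>
      (\<forall>k<n. (\<not> sat_prefix_attr s d n phi cost tau k \<longrightarrow> tau ! k = (\<not> attractor s d n ! k))
           \<and> (sat_prefix_attr s d n phi cost tau k \<longrightarrow> tau ! k = attractor s d n ! k)))"

definition lex_max_model ::
  "signedness \<Rightarrow> direction \<Rightarrow> nat \<Rightarrow> ('m \<Rightarrow> bool) \<Rightarrow> ('m \<Rightarrow> bool list) \<Rightarrow> 'm \<Rightarrow> bool" where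
  "lex_max_model s d n phi cost M = lex_max_assignment s d n phi cost (cost M)"

definition optimal ::
  "signedness \<Rightarrow> direction \<Rightarrow> ('m \<Rightarrow> bool) \<Rightarrow> ('m \<Rightarrow> bool list) \<Rightarrow> 'm \<Rightarrow> bool" where
  "optimal s d phi cost M = (phi M \<and> (\<forall>M'. phi M' \<longrightarrow> better_eq s d (cost M) (cost M')))"

end

theory Submission
  imports Defs
begin

fun uval :: "bool list \<Rightarrow> int" where
  "uval [] = 0"
| "uval (b # bs) = bit_val b * 2 ^ length bs + uval bs"

lemma uval_nonneg: "0 \<le> uval bs"
  by (induction bs) (auto simp: bit_val_def)

lemma uval_lt: "uval bs < 2 ^ length bs"
proof (induction bs)
  case Nil then show ?case by simp
next
  case (Cons b bs)
  have h: "(2::int) ^ length bs \<le> 2 * 2 ^ length bs" by simp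
  show ?case
  proof (cases b)
    case True then show ?thesis using Cons by (simp add: bit_val_def)
  next
    case False
    then have "uval (b # bs) = uval bs" by (simp add: bit_val_def)
    moreover have "(2::int) ^ length (b # bs) = 2 * 2 ^ length bs" by simp
    ultimately show ?thesis using Cons h by linarith
  qed
qed

lemma uval_sum: "uval bs = (\<Sum>k<length bs. 2 ^ (length bs - 1 - k) * bit_val (bs ! k))"
proof (induction bs)
  case Nil
  then show ?case by simp
next
  case (Cons b bs)
  show ?case
    unfolding sum.lessThan_Suc_shift length_Cons
    using Cons by (simp add: algebra_simps)
qed

lemma bv_unsigned: "bv_val Unsigned bs = uval bs"
  by (simp add: bv_val_def uval_sum Let_def)

lemma bv_signed: "bv_val Signed (b # bs) = - (2 ^ length bs) * bit_val b + uval bs"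
proof -
  have "(\<Sum>k\<in>{1..<Suc (length bs)}. 2 ^ (length bs - k) * bit_val ((b # bs) ! k))
      = (\<Sum>k\<in>{0..<length bs}. 2 ^ (length bs - Suc k) * bit_val ((b # bs) ! Suc k))"
    using sum.shift_bounds_Suc_ivl[of "\<lambda>k. 2 ^ (length bs - k) * bit_val ((b # bs) ! k)" 0 "length bs"]
    by simp
  also have "\<dots> = uval bs" by (simp add: uval_sum atLeast0LessThan)
  finally show ?thesis by (simp add: bv_val_def Let_def)
qed

lemma uval_lex:
  "length v = length w \<Longrightarrow> k < length v \<Longrightarrow> take k v = take k w \<Longrightarrow>
   \<not> v ! k \<Longrightarrow> w ! k \<Longrightarrow> uval v < uval w"
proof (induction v arbitrary: w k)
  case Nil
  then show ?case by simp
next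
  case (Cons x r)
  then obtain y r' where w: "w = y # r'" by (cases w) auto
  show ?case
  proof (cases k)
    case 0
    then show ?thesis using Cons.prems w uval_lt[of r] uval_nonneg[of r']
      by (auto simp: bit_val_def)
  next
    case (Suc j)
    then have "uval r < uval r'" using Cons.prems w by (intro Cons.IH[of r' j]) auto
    then show ?thesis using Cons.prems w Suc by auto
  qed
qed

fun attr_expl :: "signedness \<Rightarrow> direction \<Rightarrow> nat \<Rightarrow> bool list" where
  "attr_expl Unsigned Minimize n = replicate n False"
| "attr_expl Unsigned Maximize n = replicate n True"
| "attr_expl Signed Minimize n = True # replicate (n - 1) False"
| "attr_expl Signed Maximize n = False # replicate (n - 1) True"

lemma attr_expl_len: "n \<ge> 1 \<Longrightarrow> length (attr_expl s d n) = n"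
  by (cases s; cases d) auto

definition sbetter :: "signedness \<Rightarrow> direction \<Rightarrow> bool list \<Rightarrow> bool list \<Rightarrow> bool" where
  "sbetter s d v w = (case d of Minimize \<Rightarrow> bv_val s v < bv_val s w
                              | Maximize \<Rightarrow> bv_val s v > bv_val s w)"

lemma strict:
  assumes "n \<ge> 1" "length v = n" "length w = n" "k < n" "take k v = take k w"
    "v ! k \<noteq> w ! k" "v ! k = attr_expl s d n ! k"
  shows "sbetter s d v w"
proof (cases s)
  case Unsigned
  then show ?thesis
  proof (cases d)
    case Minimize
    then have "uval v < uval w" using assms Unsigned by (intro uval_lex[of v w k]) auto
    then show ?thesis using Unsigned Minimize by (simp add: sbetter_def bv_unsigned)
  next
    case Maximize
    then have "uval w < uval v" using assms Unsigned by (intro uval_lex[of w v k]) auto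
    then show ?thesis using Unsigned Maximize by (simp add: sbetter_def bv_unsigned)
  qed
next
  case Signed
  obtain x r where v: "v = x # r" using assms by (cases v) auto
  obtain y r' where w: "w = y # r'" using assms by (cases w) auto
  have lr: "length r = n - 1" "length r' = n - 1" using assms v w by auto
  show ?thesis
  proof (cases k)
    case 0
    then show ?thesis using assms v w lr uval_lt[of r] uval_lt[of r'] uval_nonneg[of r]
        uval_nonneg[of r'] Signed
      by (cases d) (auto simp: sbetter_def bv_signed bit_val_def)
  next
    case (Suc j)
    have xy: "x = y" using assms v w Suc by auto
    have tk: "take j r = take j r'" using assms v w Suc by auto
    have jl: "j < length r" using assms v Suc by auto
    show ?thesis
    proof (cases d)
      case Minimize
      then have "uval r < uval r'" using assms Signed v w Suc tk jl lr
        by (intro uval_lex[of r r' j]) auto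
      then show ?thesis using Signed Minimize v w xy lr by (simp add: sbetter_def bv_signed)
    next
      case Maximize
      then have "uval r' < uval r" using assms Signed v w Suc tk jl lr
        by (intro uval_lex[of r' r j]) auto
      then show ?thesis using Signed Maximize v w xy lr by (simp add: sbetter_def bv_signed)
    qed
  qed
qed

lemma first_diff:
  "length v = length w \<Longrightarrow> v \<noteq> w \<Longrightarrow> \<exists>k<length v. take k v = take k w \<and> v ! k \<noteq> w ! k"
proof (induction v arbitrary: w)
  case Nil
  then show ?case by simp
next
  case (Cons x r)
  then obtain y r' where w: "w = y # r'" by (cases w) auto
  show ?case
  proof (cases "x = y")
    case True
    then have "r \<noteq> r'" "length r = length r'" using Cons.prems w by auto
    then obtain k where "k < length r" "take k r = take k r'" "r ! k \<noteq> r' ! k"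
      using Cons.IH by blast
    then show ?thesis using w True by (intro exI[of _ "Suc k"]) auto
  next
    case False
    then show ?thesis using w by (intro exI[of _ 0]) auto
  qed
qed

lemma sbetter_imp: "sbetter s d v w \<Longrightarrow> better_eq s d v w"
  by (cases d) (auto simp: sbetter_def better_eq_def)

lemma sbetter_not: "sbetter s d v w \<Longrightarrow> \<not> better_eq s d w v"
  by (cases d) (auto simp: sbetter_def better_eq_def)

lemma attr_good:
  assumes "n \<ge> 1" "length w = n"
  shows "better_eq s d (attr_expl s d n) w"
proof (cases "w = attr_expl s d n")
  case True
  then show ?thesis by (cases d) (auto simp: better_eq_def)
next
  case False
  then obtain k where "k < n" "take k (attr_expl s d n) = take k w"
      "attr_expl s d n ! k \<noteq> w ! k"
    using first_diff[of "attr_expl s d n" w] assms attr_expl_len by fastforce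
  then show ?thesis using strict[of n "attr_expl s d n" w k s d] assms attr_expl_len sbetter_imp
    by blast
qed

lemma attractor_eq:
  assumes "n \<ge> 1"
  shows "attractor s d n = attr_expl s d n"
proof -
  let ?P = "\<lambda>a. length a = n \<and> (\<forall>w. length w = n \<longrightarrow> better_eq s d a w)"
  have "?P (attr_expl s d n)" using assms attr_good attr_expl_len by blast
  then have P: "?P (attractor s d n)" unfolding attractor_def by (rule someI)
  show ?thesis
  proof (rule ccontr)
    assume ne: "attractor s d n \<noteq> attr_expl s d n"
    then obtain k where "k < n" "take k (attr_expl s d n) = take k (attractor s d n)"
      "attr_expl s d n ! k \<noteq> attractor s d n ! k"
      using first_diff[of "attr_expl s d n" "attractor s d n"] assms attr_expl_len P by fastforce
    then have "sbetter s d (attr_expl s d n) (attractor s d n)"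
      using strict[of n "attr_expl s d n" "attractor s d n" k s d] assms attr_expl_len P by blast
    then show False using sbetter_not P attr_expl_len assms by blast
  qed
qed

theorem theorem1:
  fixes phi :: "'m \<Rightarrow> bool" and cost :: "'m \<Rightarrow> bool list" and n :: nat
    and s :: signedness and d :: direction and M :: 'm
  assumes "n \<ge> 1"
    and "\<forall>M'. length (cost M') = n"
    and "phi M"
    and "lex_max_model s d n phi cost M"
  shows "optimal s d phi cost M"
  unfolding optimal_def
proof (intro conjI allI impI)
  show "phi M" by fact
  fix M' assume pM': "phi M'"
  show "better_eq s d (cost M) (cost M')"
  proof (cases "cost M = cost M'")
    case True
    then show ?thesis by (cases d) (auto simp: better_eq_def)
  next
    case False
    then obtain k where k: "k < n" "take k (cost M) = take k (cost M')"
      "cost M ! k \<noteq> cost M' ! k"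
      using first_diff[of "cost M" "cost M'"] assms(2) by fastforce
    have lm: "(\<not> sat_prefix_attr s d n phi cost (cost M) k \<longrightarrow> cost M ! k = (\<not> attractor s d n ! k))
           \<and> (sat_prefix_attr s d n phi cost (cost M) k \<longrightarrow> cost M ! k = attractor s d n ! k)"
      using assms(4) k(1) unfolding lex_max_model_def lex_max_assignment_def by blast
    have "cost M ! k = attractor s d n ! k"
    proof (cases "cost M ! k = attractor s d n ! k")
      case False
      then have "cost M' ! k = attractor s d n ! k" using k(3) by auto
      then have "sat_prefix_attr s d n phi cost (cost M) k"
        unfolding sat_prefix_attr_def using pM' k(2) by metis
      then show ?thesis using lm by blast
    qed
    then have "sbetter s d (cost M) (cost M')"
      using strict[of n "cost M" "cost M'" k s d] assms k attractor_eq by metis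
    then show ?thesis by (rule sbetter_imp)
  qed
qed

end
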